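(* Let $d\ge1$ and fix $\gamma>0$. Then for every integer $k\ge0$, \[ \lim_{\nu\to+\infty}\alpha_k^{(\nu,\gamma)}=\begin{cases}1,&k=0,\\0,&k\neq0.\end{cases} \]
   Context: For $\nu>0$, $\alpha_k^{(\nu,\gamma)}=\frac{\Gamma(k+\frac d2)}{k!\,\Gamma(\frac d2)\Gamma(\nu)}\gamma^{2k}\int_0^{\infty}e^{-a}a^{\nu+\frac d2-1}(a+\gamma^2)^{-k-\frac d2}\,da$. *)

theory Defs
  imports "HOL-Analysis.Analysis"
begin

definition alpha :: "nat \<Rightarrow> real \<Rightarrow> real \<Rightarrow> nat \<Rightarrow> real" where
  "alpha d \<nu> \<gamma> k =
     Gamma (real k + real d / 2) / (fact k * Gamma (real d / 2) * Gamma \<nu>) * \<gamma> ^ (2 * k) *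
     (LINT a:{0<..}|lborel. exp (- a) * a powr (\<nu> + real d / 2 - 1)
                            * (a + \<gamma>\<^sup>2) powr (- real k - real d / 2))"

end

theory Submission
  imports Defs "HOL-Real_Asymp.Real_Asymp"
begin


lemma pt_upper:
  fixes a g s nu :: real and k :: nat
  assumes a: "a > 0" and g: "g > 0" and s: "s \<ge> 0"
  shows "exp (-a) * a powr (nu + s - 1) * (a + g) powr (- real k - s)
         \<le> g powr (- real k) * (exp (-a) * a powr (nu - 1))"
proof -
  have l1: "ln a \<le> ln (a + g)" using a g by simp
  have l2: "ln g \<le> ln (a + g)" using a g by simp
  have "s * ln a + real k * ln g \<le> (real k + s) * ln (a + g)"
    using mult_left_mono[OF l1 s] mult_left_mono[OF l2, of "real k"]
    by (simp add: algebra_simps)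
  hence "(nu + s - 1) * ln a + (- real k - s) * ln (a + g) \<le> (- real k) * ln g + (nu - 1) * ln a"
    by (simp add: algebra_simps)
  hence "exp ((nu + s - 1) * ln a + (- real k - s) * ln (a + g)) \<le> exp ((- real k) * ln g + (nu - 1) * ln a)"
    by simp
  thus ?thesis using a g
    by (simp add: powr_def exp_add[symmetric] algebra_simps)
qed

lemma pt_k1:
  fixes a g s nu :: real and k :: nat
  assumes a: "a > 0" and g: "g > 0" and s: "s \<ge> 0" and k: "k \<ge> 1"
  shows "exp (-a) * a powr (nu + s - 1) * (a + g) powr (- real k - s)
         \<le> g powr (1 - real k) * (exp (-a) * a powr (nu - 2))"
proof -
  have l1: "ln a \<le> ln (a + g)" using a g by simp
  have l2: "ln g \<le> ln (a + g)" using a g by simp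
  have "(s + 1) * ln a + (real k - 1) * ln g \<le> (real k + s) * ln (a + g)"
    using mult_left_mono[OF l1, of "s+1"] mult_left_mono[OF l2, of "real k - 1"] s k
    by (simp add: algebra_simps)
  hence "(nu + s - 1) * ln a + (- real k - s) * ln (a + g) \<le> (1 - real k) * ln g + (nu - 2) * ln a"
    by (simp add: algebra_simps)
  hence "exp ((nu + s - 1) * ln a + (- real k - s) * ln (a + g)) \<le> exp ((1 - real k) * ln g + (nu - 2) * ln a)"
    by simp
  thus ?thesis using a g
    by (simp add: powr_def exp_add[symmetric] algebra_simps)
qed

lemma pt_lower:
  fixes a g s nu :: real
  assumes a: "a > 0" and g: "g > 0" and s: "s \<ge> 0"
  shows "exp (-a) * a powr (nu - 1) - s * g * (exp (-a) * a powr (nu - 2))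
         \<le> exp (-a) * a powr (nu + s - 1) * (a + g) powr (- s)"
proof -
  have "ln (a + g) - ln a = ln ((a + g) / a)" using a g
    by (simp add: ln_div)
  also have "ln ((a + g) / a) = ln (1 + g / a)" using a by (simp add: field_simps)
  also have "\<dots> \<le> g / a" using a g by (intro ln_add_one_self_le_self) simp
  finally have h: "ln (a + g) - ln a \<le> g / a" .
  have "1 - s * (g / a) \<le> exp (- (s * (g / a)))" using exp_ge_add_one_self[of "- (s * (g/a))"] by simp
  also have "\<dots> \<le> exp (s * ln a - s * ln (a + g))"
    using mult_left_mono[OF h s] by (simp add: algebra_simps)
  finally have e: "1 - s * (g / a) \<le> exp (s * ln a - s * ln (a + g))" .
  have p: "exp (-a) * a powr (nu - 1) > 0" using a by simp
  have "exp (-a) * a powr (nu - 1) - s * g * (exp (-a) * a powr (nu - 2))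
        = (exp (-a) * a powr (nu - 1)) * (1 - s * (g / a))"
  proof -
    have "a powr (nu - 1) = a powr (nu - 2) * a"
      using a powr_add[of a "nu - 2" 1] by simp
    thus ?thesis using a by (simp add: field_simps)
  qed
  also have "\<dots> \<le> (exp (-a) * a powr (nu - 1)) * exp (s * ln a - s * ln (a + g))"
    using e p by (intro mult_left_mono) auto
  also have "\<dots> = exp (-a) * a powr (nu + s - 1) * (a + g) powr (- s)"
    using a g by (simp add: powr_def exp_add exp_diff exp_minus field_simps)
  finally show ?thesis .
qed



lemma gamma_set:
  fixes x :: real assumes x: "x > 0"
  shows "set_integrable lborel {0<..} (\<lambda>a. exp (-a) * a powr (x - 1))"
    and "(LINT a:{0<..}|lborel. exp (-a) * a powr (x - 1)) = Gamma x"
proof -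
  have hb: "has_bochner_integral lborel (\<lambda>t. indicator {0..} t * t powr (x - 1) / exp t) (Gamma x)"
    by (rule has_bochner_integral_nn_integral)
       (use x in \<open>auto simp: Gamma_conv_nn_integral_real less_imp_le\<close>)
  have eq: "(\<lambda>t. indicator {0<..} t *\<^sub>R (exp (-t) * t powr (x - 1)))
          = (\<lambda>t. indicator {0..} t * t powr (x - 1) / exp t)"
    by (rule ext) (auto simp: indicator_def exp_minus field_simps)
  show "set_integrable lborel {0<..} (\<lambda>a. exp (-a) * a powr (x - 1))"
    using hb unfolding set_integrable_def eq has_bochner_integral_iff by simp
  show "(LINT a:{0<..}|lborel. exp (-a) * a powr (x - 1)) = Gamma x"
    using hb unfolding set_lebesgue_integral_def eq has_bochner_integral_iff by simp
qed

lemma meas: "set_borel_measurable lborel {0<..} (\<lambda>a::real. exp (-a) * a powr (nu + s - 1) * (a + g) powr (- real k - s))"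
  unfolding set_borel_measurable_def by measurable



lemma int_bounds:
  fixes nu s g :: real and k :: nat
  assumes nu: "nu > 2" and g: "g > 0" and s: "s \<ge> 0"
  defines "F \<equiv> (\<lambda>a. exp (-a) * a powr (nu + s - 1) * (a + g) powr (- real k - s))"
  shows "set_integrable lborel {0<..} F"
    and "0 \<le> (LINT a:{0<..}|lborel. F a)"
    and "k = 0 \<Longrightarrow> (LINT a:{0<..}|lborel. F a) \<le> Gamma nu"
    and "k = 0 \<Longrightarrow> Gamma nu - s * g * Gamma (nu - 1) \<le> (LINT a:{0<..}|lborel. F a)"
    and "k \<ge> 1 \<Longrightarrow> (LINT a:{0<..}|lborel. F a) \<le> g powr (1 - real k) * Gamma (nu - 1)"
proof -
  have G1: "set_integrable lborel {0<..} (\<lambda>a. exp (-a) * a powr (nu - 1))"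
    and G1e: "(LINT a:{0<..}|lborel. exp (-a) * a powr (nu - 1)) = Gamma nu"
    using gamma_set[of nu] nu by auto
  have G2: "set_integrable lborel {0<..} (\<lambda>a. exp (-a) * a powr (nu - 1 - 1))"
    and G2e: "(LINT a:{0<..}|lborel. exp (-a) * a powr (nu - 1 - 1)) = Gamma (nu - 1)"
    using gamma_set[of "nu - 1"] nu by auto
  have G2': "set_integrable lborel {0<..} (\<lambda>a. exp (-a) * a powr (nu - 2))"
    and G2e': "(LINT a:{0<..}|lborel. exp (-a) * a powr (nu - 2)) = Gamma (nu - 1)"
    using G2 G2e by (simp_all add: diff_diff_eq)
  have Fnn: "\<And>a. a \<in> {0<..} \<Longrightarrow> 0 \<le> F a" unfolding F_def by simp
  have Fub: "\<And>a. a \<in> {0<..} \<Longrightarrow> F a \<le> g powr (- real k) * (exp (-a) * a powr (nu - 1))"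
    unfolding F_def using pt_upper g s by auto
  have meas: "set_borel_measurable lborel {0<..} F"
    unfolding set_borel_measurable_def F_def by measurable
  show intF: "set_integrable lborel {0<..} F"
  proof (rule set_integrable_bound[OF _ meas])
    show "set_integrable lborel {0<..} (\<lambda>a. g powr (- real k) * (exp (-a) * a powr (nu - 1)))"
      using G1 by auto
    show "AE x in lborel. x \<in> {0<..} \<longrightarrow> norm (F x) \<le> norm (g powr (- real k) * (exp (-x) * x powr (nu - 1)))"
      using Fnn Fub by (intro AE_I2) (auto intro: order_trans)
  qed
  have z: "set_integrable lborel {0<..} (\<lambda>a. 0::real)" by (simp add: set_integrable_def)
  show "0 \<le> (LINT a:{0<..}|lborel. F a)"
    using set_integral_mono[OF z intF Fnn] by (simp add: set_lebesgue_integral_def)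
  show "k = 0 \<Longrightarrow> (LINT a:{0<..}|lborel. F a) \<le> Gamma nu"
    using set_integral_mono[OF intF G1] Fub G1e g by simp
  show "k = 0 \<Longrightarrow> Gamma nu - s * g * Gamma (nu - 1) \<le> (LINT a:{0<..}|lborel. F a)"
  proof -
    assume k: "k = 0"
    have L: "set_integrable lborel {0<..} (\<lambda>a. exp (-a) * a powr (nu - 1) - s * g * (exp (-a) * a powr (nu - 2)))"
      using G1 G2' by auto
    have "(LINT a:{0<..}|lborel. exp (-a) * a powr (nu - 1) - s * g * (exp (-a) * a powr (nu - 2)))
          \<le> (LINT a:{0<..}|lborel. F a)"
      by (rule set_integral_mono[OF L intF]) (use pt_lower g s k in \<open>auto simp: F_def\<close>)
    moreover have "(LINT a:{0<..}|lborel. exp (-a) * a powr (nu - 1) - s * g * (exp (-a) * a powr (nu - 2)))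
          = Gamma nu - s * g * Gamma (nu - 1)"
      using G1 G2' G1e G2e' by (subst set_integral_diff(2)) auto
    ultimately show ?thesis by simp
  qed
  show "k \<ge> 1 \<Longrightarrow> (LINT a:{0<..}|lborel. F a) \<le> g powr (1 - real k) * Gamma (nu - 1)"
  proof -
    assume k: "k \<ge> 1"
    have "(LINT a:{0<..}|lborel. F a) \<le> (LINT a:{0<..}|lborel. g powr (1 - real k) * (exp (-a) * a powr (nu - 2)))"
      by (rule set_integral_mono[OF intF]) (use G2' pt_k1 g s k in \<open>auto simp: F_def\<close>)
    thus ?thesis using G2e' by simp
  qed
qed



theorem theorem9:
  fixes d :: nat and \<gamma> :: real and k :: nat
  assumes "d \<ge> 1" and "\<gamma> > 0"
  shows "((\<lambda>\<nu>. alpha d \<nu> \<gamma> k) \<longlongrightarrow> (if k = 0 then 1 else 0)) at_top"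
proof -
  define s where "s = real d / 2"
  define g where "g = \<gamma>\<^sup>2"
  have s0: "s > 0" using assms unfolding s_def by simp
  have g0: "g > 0" using assms unfolding g_def by simp
  define K where "K = Gamma (real k + s) / (fact k * Gamma s) * \<gamma> ^ (2 * k)"
  have K0: "K \<ge> 0" unfolding K_def using s0 assms by simp
  define I where "I = (\<lambda>nu. LINT a:{0<..}|lborel. exp (-a) * a powr (nu + s - 1) * (a + g) powr (- real k - s))"
  have alpha_eq: "alpha d nu \<gamma> k = K * (I nu / Gamma nu)" for nu
    unfolding alpha_def K_def I_def s_def g_def by simp
  have Grec: "Gamma nu = (nu - 1) * Gamma (nu - 1)" if "nu > 2" for nu :: real
  proof -
    have "nu - 1 \<notin> \<int>\<^sub>\<le>\<^sub>0" using that nonpos_Ints_nonpos by force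
    from Gamma_plus1[OF this] show ?thesis by simp
  qed
  note B = int_bounds[OF _ g0 less_imp_le[OF s0], of _ k, folded I_def]
  show ?thesis
  proof (cases "k = 0")
    case True
    have Gs: "Gamma s \<noteq> 0" using Gamma_real_pos[OF s0] by linarith
    have K1: "K = 1" unfolding K_def using True Gs by simp
    have up: "eventually (\<lambda>nu. alpha d nu \<gamma> k \<le> 1) at_top"
      using eventually_gt_at_top[of 2]
    proof eventually_elim
      case (elim nu)
      have "I nu \<le> Gamma nu" using B(3)[OF elim True] unfolding I_def .
      thus ?case using elim K1 by (simp add: alpha_eq)
    qed
    have lo: "eventually (\<lambda>nu. 1 - s * g / (nu - 1) \<le> alpha d nu \<gamma> k) at_top"
      using eventually_gt_at_top[of 2]
    proof eventually_elim
      case (elim nu)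
      have h: "Gamma nu - s * g * Gamma (nu - 1) \<le> I nu" using B(4)[OF elim True] unfolding I_def .
      have p: "Gamma (nu - 1) > 0" using elim by simp
      have r: "Gamma nu = (nu - 1) * Gamma (nu - 1)" using Grec elim by simp
      have pn: "Gamma nu > 0" using elim by simp
      have "1 - s * g / (nu - 1) = (Gamma nu - s * g * Gamma (nu - 1)) / Gamma nu"
      proof -
        have a1: "Gamma (nu - 1) \<noteq> 0" "nu - 1 \<noteq> 0" using p elim by linarith+
        show ?thesis unfolding r using a1 by (simp add: divide_simps) (simp add: algebra_simps)
      qed
      also have "\<dots> \<le> I nu / Gamma nu" using h pn by (intro divide_right_mono) auto
      finally show ?case using K1 by (simp add: alpha_eq)
    qed
    have "((\<lambda>nu. 1 - s * g / (nu - 1)) \<longlongrightarrow> 1) at_top" by real_asymp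
    from tendsto_sandwich[OF lo up this tendsto_const] show ?thesis using True by simp
  next
    case False
    hence k1: "k \<ge> 1" by simp
    have lo: "eventually (\<lambda>nu. 0 \<le> alpha d nu \<gamma> k) at_top"
      using eventually_gt_at_top[of 2]
    proof eventually_elim
      case (elim nu)
      have "0 \<le> I nu" using B(2)[OF elim] unfolding I_def .
      thus ?case using elim K0 by (simp add: alpha_eq)
    qed
    have up: "eventually (\<lambda>nu. alpha d nu \<gamma> k \<le> K * g powr (1 - real k) / (nu - 1)) at_top"
      using eventually_gt_at_top[of 2]
    proof eventually_elim
      case (elim nu)
      have h: "I nu \<le> g powr (1 - real k) * Gamma (nu - 1)" using B(5)[OF elim k1] unfolding I_def .
      have p: "Gamma (nu - 1) > 0" using elim by simp
      have r: "Gamma nu = (nu - 1) * Gamma (nu - 1)" using Grec elim by simp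
      have pn: "Gamma nu > 0" using elim by simp
      have "I nu / Gamma nu \<le> g powr (1 - real k) * Gamma (nu - 1) / Gamma nu"
        using h pn by (intro divide_right_mono) auto
      also have "\<dots> = g powr (1 - real k) / (nu - 1)"
      proof -
        have a1: "Gamma (nu - 1) \<noteq> 0" "nu - 1 \<noteq> 0" using p elim by linarith+
        show ?thesis unfolding r using a1 by simp
      qed
      finally have "I nu / Gamma nu \<le> g powr (1 - real k) / (nu - 1)" .
      hence "K * (I nu / Gamma nu) \<le> K * (g powr (1 - real k) / (nu - 1))"
        using K0 by (rule mult_left_mono)
      thus ?case by (simp add: alpha_eq)
    qed
    have "((\<lambda>nu. K * g powr (1 - real k) / (nu - 1)) \<longlongrightarrow> 0) at_top" by real_asymp
    from tendsto_sandwich[OF lo up tendsto_const this] show ?thesis using False by simp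
  qed
qed

end
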